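(* Let $m,k$ be positive integers and suppose $q^mt_1t_2\cdots t_k=1$. Then $$\sum_{\text{cyclic permutations of }t_1,\ldots,t_k}\ \ \widetilde{\sum_{1\le i_1\le\cdots\le i_k\le m}}\ \frac{t_1^{1/2-i_1}\cdots t_k^{1/2-i_k}}{(q)_{i_1-1}(q^{i_1}t_1)_{i_2-i_1}(q^{i_2}t_1t_2)_{i_3-i_2}\cdots(q^{i_k}t_1\cdots t_k)_{m-i_k}}=(-1)^{m-1}\frac{q^{m^2/2}m^{k-1}}{(k-1)!}.$$
   Context: $(a)_n:=\prod_{j=0}^{n-1}(1-aq^j)$. For a function $f(i_1,\ldots,i_k)$, $\widetilde{\sum}_{1\le i_1\le\cdots\le i_k\le m}f:=\sum_{1\le i_1\le\cdots\le i_k\le m}f(i_1,\ldots,i_k)/\#\mathrm{Stab}(i_1,\ldots,i_k)$, with $\mathrm{Stab}$ the set of permutations of $\{1,\ldots,k\}$ fixing the tuple $(i_1,\ldots,i_k)$. The outer sum is over the $k$ cyclic rotations $(t_1,\ldots,t_k)\mapsto(t_{j+1},\ldots,t_k,t_1,\ldots,t_j)$ applied to the variables of the summand. Square roots are chosen with $t_1^{1/2}\cdots t_k^{1/2}=(q^{1/2})^{-m}$ and $q^{m^2/2}=(q^{1/2})^{m^2}$. *)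

theory Defs
  imports Complex_Main "HOL-Library.FuncSet" "HOL-Combinatorics.Permutations"
begin

definition qpoch :: "complex \<Rightarrow> complex \<Rightarrow> nat \<Rightarrow> complex" where
  "qpoch a q n = (\<Prod>j<n. (1 - a * q ^ j))"

text \<open>Nondecreasing tuples (i_1,...,i_k) with 1 <= i_1 <= ... <= i_k <= m,
  stored 0-indexed as functions on {0..<k}.\<close>
definition nondec_tuples :: "nat \<Rightarrow> nat \<Rightarrow> (nat \<Rightarrow> nat) set" where
  "nondec_tuples k m =
     {i \<in> {0..<k} \<rightarrow>\<^sub>E {1..m}. \<forall>j. Suc j < k \<longrightarrow> i j \<le> i (Suc j)}"

definition stab_card :: "nat \<Rightarrow> (nat \<Rightarrow> nat) \<Rightarrow> nat" where
  "stab_card k i = card {p. p permutes {0..<k} \<and> (\<forall>j<k. i (p j) = i j)}"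

definition denom :: "complex \<Rightarrow> (nat \<Rightarrow> complex) \<Rightarrow> nat \<Rightarrow> nat \<Rightarrow> (nat \<Rightarrow> nat) \<Rightarrow> complex" where
  "denom q t k m i =
     qpoch q q (i 0 - 1) *
     (\<Prod>j<k. qpoch (q ^ i j * (\<Prod>l\<le>j. t l)) q
                 ((if Suc j < k then i (Suc j) else m) - i j))"

text \<open>Summand: t_1^{1/2-i_1}...t_k^{1/2-i_k} / denominator, where s j is the
  chosen square root t_j^{1/2}, so t_j^{1/2 - i_j} = s_j / t_j^{i_j}.\<close>
definition summand :: "complex \<Rightarrow> (nat \<Rightarrow> complex) \<Rightarrow> (nat \<Rightarrow> complex) \<Rightarrow> nat \<Rightarrow> nat
    \<Rightarrow> (nat \<Rightarrow> nat) \<Rightarrow> complex" where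
  "summand q t s k m i = (\<Prod>j<k. s j / t j ^ i j) / denom q t k m i"

text \<open>The weighted sum over nondecreasing tuples (weight 1/#Stab).\<close>
definition tilde_sum :: "complex \<Rightarrow> (nat \<Rightarrow> complex) \<Rightarrow> (nat \<Rightarrow> complex) \<Rightarrow> nat \<Rightarrow> nat \<Rightarrow> complex" where
  "tilde_sum q t s k m =
     (\<Sum>i\<in>nondec_tuples k m. summand q t s k m i / of_nat (stab_card k i))"

definition rot :: "nat \<Rightarrow> nat \<Rightarrow> (nat \<Rightarrow> 'a) \<Rightarrow> nat \<Rightarrow> 'a" where
  "rot k c f = (\<lambda>j. f ((j + c) mod k))"

end

theory Submission
  imports Defs
begin
lemma pf2:
  fixes A X Y P g :: complex
  assumes "A \<noteq> X" "A \<noteq> Y" "X \<noteq> Y"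
  shows "g / ((A - X) * ((A - Y) * P)) = (g / ((A - X) * P) - g / ((A - Y) * P)) / (X - Y)"
proof (cases "P = 0")
  case True then show ?thesis by simp
next
  case False
  have a: "A - X \<noteq> 0" "A - Y \<noteq> 0" "X - Y \<noteq> 0" using assms by auto
  show ?thesis using a False by (simp add: divide_simps) (simp add: algebra_simps)
qed

lemma comb:
  fixes a b P Q U V X Y :: complex
  assumes "X \<noteq> Y" "D = a / P + U" "E = b / Q + V"
  shows "a / ((X - Y) * P) + b / ((Y - X) * Q) + (U - V) / (X - Y) = (D - E) / (X - Y)"
proof -
  have e: "(Y - X) * Q = - ((X - Y) * Q)" by (simp add: algebra_simps)
  have "b / ((Y - X) * Q) = - ((b / Q) / (X - Y))" by (simp only: e divide_minus_right) (simp add: divide_divide_eq_left mult.commute)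
  moreover have "a / ((X - Y) * P) = (a / P) / (X - Y)" by (simp add: divide_divide_eq_left mult.commute)
  ultimately show ?thesis using assms by (simp add: diff_divide_distrib add_divide_distrib)
qed

definition dd :: "('b \<Rightarrow> complex) \<Rightarrow> 'b set \<Rightarrow> nat \<Rightarrow> complex" where
  "dd v I j = (\<Sum>a\<in>I. v a ^ j / (\<Prod>b\<in>I-{a}. (v a - v b)))"

lemma dd_rec1:
  assumes fin: "finite S" and xS: "x \<notin> S" and inj: "inj_on v (insert x S)"
  shows "dd v (insert x S) (Suc j) = dd v S j + v x * dd v (insert x S) j"
proof -
  have t1: "v a ^ Suc j / (\<Prod>b\<in>insert x S-{a}. (v a - v b))
      = v a ^ j / (\<Prod>b\<in>S-{a}. (v a - v b)) + v x * (v a ^ j / (\<Prod>b\<in>insert x S-{a}. (v a - v b)))"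
    if a: "a \<in> S" for a
  proof -
    have ax: "a \<noteq> x" using a xS by auto
    have vax: "v a \<noteq> v x" using inj a ax by (metis inj_on_contraD insert_iff)
    have e: "insert x S - {a} = insert x (S - {a})" using ax by auto
    have p: "(\<Prod>b\<in>insert x S-{a}. (v a - v b)) = (v a - v x) * (\<Prod>b\<in>S-{a}. (v a - v b))"
      unfolding e using fin xS by (subst prod.insert) auto
    show ?thesis unfolding p using vax
      by (cases "(\<Prod>b\<in>S-{a}. (v a - v b)) = 0") (auto simp: field_simps)
  qed
  have "dd v (insert x S) (Suc j) = v x ^ Suc j / (\<Prod>b\<in>insert x S-{x}. (v x - v b))
       + (\<Sum>a\<in>S. v a ^ Suc j / (\<Prod>b\<in>insert x S-{a}. (v a - v b)))"
    unfolding dd_def using fin xS by (simp add: sum.insert)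
  also have "\<dots> = v x * (v x ^ j / (\<Prod>b\<in>insert x S-{x}. (v x - v b)))
       + (dd v S j + v x * (\<Sum>a\<in>S. v a ^ j / (\<Prod>b\<in>insert x S-{a}. (v a - v b))))"
    using t1 by (simp add: sum.distrib sum_distrib_left dd_def)
  also have "\<dots> = dd v S j + v x * dd v (insert x S) j"
    unfolding dd_def using fin xS by (simp add: sum.insert algebra_simps)
  finally show ?thesis .
qed

lemma dd_rec2:
  assumes fin: "finite S" and xS: "x \<notin> S" and yS: "y \<notin> S" and xy: "x \<noteq> y"
    and inj: "inj_on v (insert x (insert y S))"
  shows "dd v (insert x (insert y S)) j = (dd v (insert x S) j - dd v (insert y S) j) / (v x - v y)"
proof -
  have vxy: "v x \<noteq> v y" using inj xy by (auto dest: inj_onD)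
  have t1: "v a ^ j / (\<Prod>b\<in>insert x (insert y S)-{a}. (v a - v b))
      = (v a ^ j / (\<Prod>b\<in>insert x S-{a}. (v a - v b)) - v a ^ j / (\<Prod>b\<in>insert y S-{a}. (v a - v b))) / (v x - v y)"
    if a: "a \<in> S" for a
  proof -
    have ax: "a \<noteq> x" "a \<noteq> y" using a xS yS by auto
    have vax: "v a \<noteq> v x" "v a \<noteq> v y" using inj a ax by (metis inj_on_contraD insert_iff)+
    have e: "insert x (insert y S) - {a} = insert x (insert y (S - {a}))"
       "insert x S - {a} = insert x (S - {a})" "insert y S - {a} = insert y (S - {a})" using ax by auto
    have p: "(\<Prod>b\<in>insert x (insert y S)-{a}. (v a - v b)) = (v a - v x) * ((v a - v y) * (\<Prod>b\<in>S-{a}. (v a - v b)))"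
       "(\<Prod>b\<in>insert x S-{a}. (v a - v b)) = (v a - v x) * (\<Prod>b\<in>S-{a}. (v a - v b))"
       "(\<Prod>b\<in>insert y S-{a}. (v a - v b)) = (v a - v y) * (\<Prod>b\<in>S-{a}. (v a - v b))"
      unfolding e using fin xS yS xy by (subst prod.insert; auto)+
    show ?thesis unfolding p using vax vxy by (intro pf2) auto
  qed
  have ex: "insert x (insert y S) - {x} = insert y S" "insert x (insert y S) - {y} = insert x S"
    "insert x S - {x} = S" "insert y S - {y} = S" using xS yS xy by auto
  have px: "(\<Prod>b\<in>insert y S. (v x - v b)) = (v x - v y) * (\<Prod>b\<in>S. (v x - v b))"
    using fin yS by simp
  have py: "(\<Prod>b\<in>insert x S. (v y - v b)) = (v y - v x) * (\<Prod>b\<in>S. (v y - v b))"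
    using fin xS by simp
  have "dd v (insert x (insert y S)) j = v x ^ j / (\<Prod>b\<in>insert y S. (v x - v b))
     + v y ^ j / (\<Prod>b\<in>insert x S. (v y - v b))
     + (\<Sum>a\<in>S. v a ^ j / (\<Prod>b\<in>insert x (insert y S)-{a}. (v a - v b)))"
    unfolding dd_def using fin xS yS xy by (simp add: sum.insert ex)
  also have "(\<Sum>a\<in>S. v a ^ j / (\<Prod>b\<in>insert x (insert y S)-{a}. (v a - v b)))
     = ((\<Sum>a\<in>S. v a ^ j / (\<Prod>b\<in>insert x S-{a}. (v a - v b))) - (\<Sum>a\<in>S. v a ^ j / (\<Prod>b\<in>insert y S-{a}. (v a - v b)))) / (v x - v y)"
    by (simp add: t1 sum_divide_distrib[symmetric] sum_subtractf[symmetric])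
  finally have h1: "dd v (insert x (insert y S)) j = v x ^ j / (\<Prod>b\<in>insert y S. (v x - v b))
     + v y ^ j / (\<Prod>b\<in>insert x S. (v y - v b))
     + ((\<Sum>a\<in>S. v a ^ j / (\<Prod>b\<in>insert x S-{a}. (v a - v b))) - (\<Sum>a\<in>S. v a ^ j / (\<Prod>b\<in>insert y S-{a}. (v a - v b)))) / (v x - v y)" .
  have hx: "dd v (insert x S) j = v x ^ j / (\<Prod>b\<in>S. (v x - v b)) + (\<Sum>a\<in>S. v a ^ j / (\<Prod>b\<in>insert x S-{a}. (v a - v b)))"
    unfolding dd_def using fin xS by (simp add: ex)
  have hy: "dd v (insert y S) j = v y ^ j / (\<Prod>b\<in>S. (v y - v b)) + (\<Sum>a\<in>S. v a ^ j / (\<Prod>b\<in>insert y S-{a}. (v a - v b)))"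
    unfolding dd_def using fin yS by (simp add: ex)
  show ?thesis unfolding h1 px py by (rule comb[OF vxy hx hy])
qed


lemma dd_single: "dd v {x} 0 = 1"
  unfolding dd_def by simp

lemma dd_zero:
  assumes "finite I" "inj_on v I" "2 \<le> card I"
  shows "dd v I 0 = 0"
  using assms
proof (induction "card I" arbitrary: I rule: less_induct)
  case less
  from less.prems have "I \<noteq> {}" by auto
  then obtain x where x: "x \<in> I" by auto
  have "card (I - {x}) \<ge> 1" using less.prems x by (simp add: card_Diff_singleton)
  then have "I - {x} \<noteq> {}" by (metis Suc_le_eq card_gt_0_iff One_nat_def)
  then obtain y where y: "y \<in> I" "y \<noteq> x" by auto
  define S where "S = I - {x, y}"
  have I: "I = insert x (insert y S)" using x y S_def by auto
  have fS: "finite S" using less.prems S_def by auto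
  have nS: "x \<notin> S" "y \<notin> S" using S_def by auto
  have r: "dd v I 0 = (dd v (insert x S) 0 - dd v (insert y S) 0) / (v x - v y)"
    unfolding I using dd_rec2[OF fS nS y(2)[symmetric]] less.prems(2) I by simp
  show ?case
  proof (cases "S = {}")
    case True
    then show ?thesis using r by (simp add: dd_single)
  next
    case False
    have c: "card (insert x S) < card I" "card (insert y S) < card I"
      unfolding I using fS nS y(2) by auto
    have c2: "2 \<le> card (insert x S)" "2 \<le> card (insert y S)"
      using False fS nS by (auto simp: card_insert_if Suc_le_eq card_gt_0_iff)
    have "dd v (insert x S) 0 = 0"
      by (rule less.hyps[OF c(1)]) (use fS less.prems(2) c2 I in \<open>auto intro: inj_on_subset\<close>)
    moreover have "dd v (insert y S) 0 = 0"
      by (rule less.hyps[OF c(2)]) (use fS less.prems(2) c2 I in \<open>auto intro: inj_on_subset\<close>)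
    ultimately show ?thesis using r by simp
  qed
qed

lemma dd_top:
  assumes "finite I" "inj_on v I" "I \<noteq> {}" "j < card I"
  shows "dd v I j = (if j = card I - 1 then 1 else 0)"
  using assms
proof (induction j arbitrary: I)
  case 0
  show ?case
  proof (cases "card I = 1")
    case True
    then obtain x where "I = {x}" by (auto simp: card_Suc_eq)
    then show ?thesis using dd_single by simp
  next
    case False
    have "card I > 0" using 0 by (simp add: card_gt_0_iff)
    then have "2 \<le> card I" using False by linarith
    then show ?thesis using dd_zero 0 by auto
  qed
next
  case (Suc j)
  from Suc.prems obtain x where x: "x \<in> I" by auto
  define S where "S = I - {x}"
  have I: "I = insert x S" "x \<notin> S" using x S_def by auto
  have fS: "finite S" using Suc.prems S_def by auto
  have cS: "card S = card I - 1" using Suc.prems x S_def by simp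
  have Sne: "S \<noteq> {}" using Suc.prems cS by auto
  have r: "dd v I (Suc j) = dd v S j + v x * dd v I j"
    using dd_rec1[OF fS I(2), of v j] Suc.prems I by simp
  have h1: "dd v S j = (if j = card S - 1 then 1 else 0)"
    by (rule Suc.IH) (use Suc.prems fS Sne cS S_def in \<open>auto intro: inj_on_subset\<close>)
  have h2: "dd v I j = 0"
    using Suc.IH[of I] Suc.prems by auto
  show ?case using r h1 h2 cS Suc.prems by auto
qed

lemma lagrange1:
  fixes v :: "'b \<Rightarrow> complex"
  assumes "finite I" "inj_on v I" "I \<noteq> {}"
  shows "(\<Sum>a\<in>I. \<Prod>b\<in>I-{a}. v a / (v a - v b)) = 1"
proof -
  have "(\<Sum>a\<in>I. \<Prod>b\<in>I-{a}. v a / (v a - v b)) = dd v I (card I - 1)"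
    unfolding dd_def
  proof (rule sum.cong)
    fix a assume a: "a \<in> I"
    have "card (I - {a}) = card I - 1" using a assms by simp
    then show "(\<Prod>b\<in>I-{a}. v a / (v a - v b)) = v a ^ (card I - 1) / (\<Prod>b\<in>I-{a}. (v a - v b))"
      by (simp add: prod_dividef)
  qed simp
  also have "\<dots> = 1" using dd_top[OF assms] assms by (simp add: card_gt_0_iff)
  finally show ?thesis .
qed

lemma nd_vals:
  assumes "i \<in> nondec_tuples k m" "j < k"
  shows "1 \<le> i j" "i j \<le> m"
  using assms unfolding nondec_tuples_def by (auto simp: PiE_def Pi_def)

lemma nd_mono:
  assumes "i \<in> nondec_tuples k m" "j \<le> j'" "j' < k"
  shows "i j \<le> i j'"
  using assms(2,3)
proof (induction j' rule: dec_induct)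
  case base then show ?case by simp
next
  case (step n)
  then have "i n \<le> i (Suc n)" using assms(1) unfolding nondec_tuples_def by auto
  then show ?case using step by simp
qed

lemma downset_eq:
  assumes "S \<subseteq> {..<k}" "\<And>p p'. p \<in> S \<Longrightarrow> p' < p \<Longrightarrow> p' \<in> S"
  shows "S = {..<card S}"
proof -
  have fin: "finite S" using assms(1) finite_subset by blast
  show ?thesis
  proof (intro set_eqI iffI)
    fix p assume p: "p \<in> S"
    have "{..p} \<subseteq> S" using assms(2) p by (auto simp: le_less)
    then have "card {..p} \<le> card S" using fin card_mono by blast
    then show "p \<in> {..<card S}" by simp
  next
    fix p assume p: "p \<in> {..<card S}"
    show "p \<in> S"
    proof (rule ccontr)
      assume "p \<notin> S"
      then have "S \<subseteq> {..<p}" using assms(2) by (metis lessThan_iff not_less_iff_gr_or_eq subsetI)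
      then have "card S \<le> p" using card_mono[of "{..<p}" S] by simp
      then show False using p by simp
    qed
  qed
qed

lemma nd_downset:
  assumes "i \<in> nondec_tuples k m"
  shows "{p. p < k \<and> i p \<le> l} = {..<card {p. p < k \<and> i p \<le> l}}"
proof (rule downset_eq)
  fix p p' assume "p \<in> {p. p < k \<and> i p \<le> l}" "p' < p"
  then show "p' \<in> {p. p < k \<and> i p \<le> l}" using nd_mono[OF assms, of p' p] by auto
qed auto

lemma nd_downset_lt:
  assumes "i \<in> nondec_tuples k m"
  shows "{p. p < k \<and> i p < l} = {..<card {p. p < k \<and> i p < l}}"
proof (rule downset_eq)
  fix p p' assume "p \<in> {p. p < k \<and> i p < l}" "p' < p"
  then show "p' \<in> {p. p < k \<and> i p < l}" using nd_mono[OF assms, of p' p] by auto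
qed auto

lemma blocks:
  fixes F :: "nat \<Rightarrow> nat set \<Rightarrow> 'a::comm_monoid_mult"
  assumes "i \<in> nondec_tuples k m" "k' \<le> k" "\<forall>j<k'. i j \<le> M" "M \<le> m"
  shows "(\<Prod>l\<in>{1..<(if k' = 0 then M else i 0)}. F l {}) *
         (\<Prod>j<k'. \<Prod>l\<in>{i j..<(if Suc j < k' then i (Suc j) else M)}. F l {..j})
       = (\<Prod>l\<in>{1..<M}. F l {j. j < k' \<and> i j \<le> l})"
  using assms(2,3,4)
proof (induction k' arbitrary: M)
  case 0
  then show ?case by simp
next
  case (Suc k')
  have ik: "i k' \<le> M" "1 \<le> i k'" "i k' \<le> m" using Suc.prems nd_vals[OF assms(1)] by auto
  have IH: "(\<Prod>l\<in>{1..<(if k' = 0 then i k' else i 0)}. F l {}) *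
         (\<Prod>j<k'. \<Prod>l\<in>{i j..<(if Suc j < k' then i (Suc j) else i k')}. F l {..j})
       = (\<Prod>l\<in>{1..<i k'}. F l {j. j < k' \<and> i j \<le> l})"
    by (rule Suc.IH) (use Suc.prems nd_mono[OF assms(1)] ik in auto)
  have e1: "(if k' = 0 then i k' else i 0) = (if Suc k' = 0 then M else i 0)" by simp
  have e2: "(\<Prod>j<k'. \<Prod>l\<in>{i j..<(if Suc j < k' then i (Suc j) else i k')}. F l {..j})
     = (\<Prod>j<k'. \<Prod>l\<in>{i j..<(if Suc j < Suc k' then i (Suc j) else M)}. F l {..j})"
    by (rule prod.cong) (auto simp: less_Suc_eq)
  have e3: "(\<Prod>l\<in>{1..<i k'}. F l {j. j < k' \<and> i j \<le> l}) = (\<Prod>l\<in>{1..<i k'}. F l {j. j < Suc k' \<and> i j \<le> l})"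
  proof (rule prod.cong)
    fix l assume "l \<in> {1..<i k'}"
    then have "{j. j < k' \<and> i j \<le> l} = {j. j < Suc k' \<and> i j \<le> l}" by (auto simp: less_Suc_eq)
    then show "F l {j. j < k' \<and> i j \<le> l} = F l {j. j < Suc k' \<and> i j \<le> l}" by simp
  qed simp
  have e4: "(\<Prod>l\<in>{i k'..<M}. F l {..k'}) = (\<Prod>l\<in>{i k'..<M}. F l {j. j < Suc k' \<and> i j \<le> l})"
  proof (rule prod.cong)
    fix l assume l: "l \<in> {i k'..<M}"
    have "{..k'} = {j. j < Suc k' \<and> i j \<le> l}"
      using l nd_mono[OF assms(1), of _ k'] Suc.prems by (force simp: less_Suc_eq_le)
    then show "F l {..k'} = F l {j. j < Suc k' \<and> i j \<le> l}" by simp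
  qed simp
  have split: "{1..<M} = {1..<i k'} \<union> {i k'..<M}" using ik by auto
  have "(\<Prod>l\<in>{1..<M}. F l {j. j < Suc k' \<and> i j \<le> l}) =
     (\<Prod>l\<in>{1..<i k'}. F l {j. j < Suc k' \<and> i j \<le> l}) * (\<Prod>l\<in>{i k'..<M}. F l {j. j < Suc k' \<and> i j \<le> l})"
    unfolding split by (rule prod.union_disjoint) auto
  then show ?case
    using IH unfolding e1 e2 e3 e4[symmetric] by (simp add: mult.assoc[symmetric])
qed

lemma prod_shift_ivl:
  fixes a b :: nat
  assumes "a \<le> b"
  shows "(\<Prod>l\<in>{a..<b}. g l) = (\<Prod>p<b-a. g (a + p))"
  by (rule prod.reindex_bij_witness[of _ "\<lambda>p. a + p" "\<lambda>l. l - a"]) (use assms in auto)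

lemma mod_add_cancel_r: "((x::nat) + c) mod k = (y + c) mod k \<Longrightarrow> x mod k = y mod k"
  by (simp add: nat_mod_eq_iff)

lemma rot_bij:
  fixes k c :: nat
  assumes "k > 0"
  shows "bij_betw (\<lambda>j. (j + c) mod k) {..<k} {..<k}"
proof -
  have "inj_on (\<lambda>j. (j + c) mod k) {..<k}"
  proof (rule inj_onI)
    fix x y assume xy: "x \<in> {..<k}" "y \<in> {..<k}" "(x + c) mod k = (y + c) mod k"
    then have "x mod k = y mod k" using mod_add_cancel_r[OF xy(3)] by simp
    then show "x = y" using xy by simp
  qed
  moreover have "(\<lambda>j. (j + c) mod k) ` {..<k} \<subseteq> {..<k}" using assms by auto
  ultimately show ?thesis by (simp add: bij_betw_def endo_inj_surj)
qed

lemma prod_rot: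
  fixes k c :: nat
  assumes "k > 0"
  shows "(\<Prod>j<k. f ((j + c) mod k)) = (\<Prod>j<k. f j)"
  using prod.reindex_bij_betw[OF rot_bij[OF assms, of c], of f] by simp

definition PP :: "(nat \<Rightarrow> complex) \<Rightarrow> nat \<Rightarrow> nat \<Rightarrow> (nat \<Rightarrow> nat) \<Rightarrow> nat \<Rightarrow> complex" where
  "PP t k c i l = (\<Prod>p\<in>{p. p < k \<and> i p \<le> l}. t ((p + c) mod k))"

definition vv :: "complex \<Rightarrow> (nat \<Rightarrow> complex) \<Rightarrow> nat \<Rightarrow> nat \<Rightarrow> (nat \<Rightarrow> nat) \<Rightarrow> nat \<Rightarrow> complex" where
  "vv q t k c i l = 1 / (q ^ l * PP t k c i l)"

definition ff :: "complex \<Rightarrow> (nat \<Rightarrow> complex) \<Rightarrow> nat \<Rightarrow> nat \<Rightarrow> nat \<Rightarrow> (nat \<Rightarrow> nat) \<Rightarrow> nat \<Rightarrow> complex" where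
  "ff q t k m c i a = (\<Prod>b\<in>{..<m}-{a}. vv q t k c i a / (vv q t k c i a - vv q t k c i b))"

lemma denom_eq:
  assumes i: "i \<in> nondec_tuples k m" and k: "k > 0"
  shows "denom q (rot k c t) k m i = (\<Prod>l\<in>{1..<m}. (1 - q ^ l * PP t k c i l))"
proof -
  define F where "F = (\<lambda>l A. 1 - q ^ l * (\<Prod>p\<in>A. t ((p + c) mod k)))"
  have i0: "1 \<le> i 0" using nd_vals[OF i] k by auto
  have a: "qpoch q q (i 0 - 1) = (\<Prod>l\<in>{1..<i 0}. F l {})"
    unfolding qpoch_def F_def using i0 by (subst prod_shift_ivl) (auto simp: power_Suc)
  have b: "qpoch (q ^ i j * (\<Prod>l\<le>j. rot k c t l)) q ((if Suc j < k then i (Suc j) else m) - i j)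
        = (\<Prod>l\<in>{i j..<(if Suc j < k then i (Suc j) else m)}. F l {..j})" if j: "j < k" for j
  proof -
    have le: "i j \<le> (if Suc j < k then i (Suc j) else m)"
      using nd_vals[OF i j] i unfolding nondec_tuples_def by auto
    show ?thesis
      unfolding qpoch_def F_def rot_def using le by (subst prod_shift_ivl) (auto simp: power_add mult_ac)
  qed
  have "denom q (rot k c t) k m i = (\<Prod>l\<in>{1..<(if k = 0 then m else i 0)}. F l {}) *
         (\<Prod>j<k. \<Prod>l\<in>{i j..<(if Suc j < k then i (Suc j) else m)}. F l {..j})"
    unfolding denom_def a using k b by simp
  also have "\<dots> = (\<Prod>l\<in>{1..<m}. F l {j. j < k \<and> i j \<le> l})"
    by (rule blocks[OF i]) (use nd_vals[OF i] in auto)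
  finally show ?thesis unfolding F_def PP_def .
qed


lemma nz_from_constraint:
  fixes q :: complex and k :: nat and t :: "nat \<Rightarrow> complex"
  assumes "q ^ m * (\<Prod>j<k. t j) = 1"
  shows "q ^ m \<noteq> 0" "\<And>j. j < k \<Longrightarrow> t j \<noteq> 0"
proof -
  show "q ^ m \<noteq> 0" using assms by (metis mult_zero_left zero_neq_one)
  fix j assume "j < k"
  moreover have "(\<Prod>j<k. t j) \<noteq> 0" using assms by (metis mult_zero_right zero_neq_one)
  ultimately show "t j \<noteq> 0"
  proof -
    assume jk: "j < k" and pz: "(\<Prod>j<k. t j) \<noteq> 0"
    show "t j \<noteq> 0"
    proof
      assume "t j = 0"
      then have "(\<Prod>j<k. t j) = 0" using jk by (intro prod_zero) auto
      then show False using pz by simp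
    qed
  qed
qed

lemma PP_nz:
  assumes "\<And>j. j < k \<Longrightarrow> t j \<noteq> 0" "k > 0"
  shows "PP t k c i l \<noteq> 0"
  unfolding PP_def using assms by (auto simp: prod_zero_iff)

lemma PP_zero:
  assumes "i \<in> nondec_tuples k m"
  shows "PP t k c i 0 = 1"
proof -
  have e: "{p. p < k \<and> i p \<le> 0} = {}" by (force dest: nd_vals(1)[OF assms])
  show ?thesis unfolding PP_def e by simp
qed

lemma prodPP:
  assumes i: "i \<in> nondec_tuples k m" and k: "k > 0"
  shows "(\<Prod>l\<in>{1..<m}. PP t k c i l) * (\<Prod>p<k. t ((p + c) mod k) ^ i p) = (\<Prod>p<k. t p) ^ m"
proof -
  have "(\<Prod>l\<in>{1..<m}. PP t k c i l) = (\<Prod>l\<in>{1..<m}. \<Prod>p\<in>{p\<in>{..<k}. i p \<le> l}. t ((p + c) mod k))"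
    unfolding PP_def by (intro prod.cong) auto
  also have "\<dots> = (\<Prod>p\<in>{..<k}. \<Prod>l\<in>{l\<in>{1..<m}. i p \<le> l}. t ((p + c) mod k))"
    by (rule prod.swap_restrict) auto
  also have "\<dots> = (\<Prod>p<k. t ((p + c) mod k) ^ (m - i p))"
  proof (rule prod.cong)
    fix p assume p: "p \<in> {..<k}"
    have "{l\<in>{1..<m}. i p \<le> l} = {i p..<m}" using nd_vals[OF i, of p] p by auto
    then show "(\<Prod>l\<in>{l\<in>{1..<m}. i p \<le> l}. t ((p + c) mod k)) = t ((p + c) mod k) ^ (m - i p)"
      by simp
  qed simp
  finally have "(\<Prod>l\<in>{1..<m}. PP t k c i l) * (\<Prod>p<k. t ((p + c) mod k) ^ i p)
      = (\<Prod>p<k. t ((p + c) mod k) ^ (m - i p) * t ((p + c) mod k) ^ i p)"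
    by (simp add: prod.distrib)
  also have "\<dots> = (\<Prod>p<k. t ((p + c) mod k) ^ m)"
  proof (rule prod.cong)
    fix p assume p: "p \<in> {..<k}"
    have "m - i p + i p = m" using nd_vals[OF i, of p] p by auto
    then show "t ((p + c) mod k) ^ (m - i p) * t ((p + c) mod k) ^ i p = t ((p + c) mod k) ^ m"
      by (metis power_add)
  qed simp
  also have "\<dots> = (\<Prod>p<k. t ((p + c) mod k)) ^ m" by (simp add: prod_power_distrib)
  also have "\<dots> = (\<Prod>p<k. t p) ^ m" using prod_rot[OF k, of t c] by simp
  finally show ?thesis .
qed

lemma gauss2: "2 * (\<Sum>b\<in>{1..<m}. b) = m * (m - 1::nat)"
proof (induction m)
  case 0 then show ?case by simp
next
  case (Suc m)
  show ?case
  proof (cases "m = 0")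
    case True then show ?thesis by simp
  next
    case False
    then have "{1..<Suc m} = insert m {1..<m}" by auto
    then have "(\<Sum>b\<in>{1..<Suc m}. b) = m + (\<Sum>b\<in>{1..<m}. b)" by simp
    then show ?thesis using Suc False by (cases m) (auto simp: algebra_simps)
  qed
qed

lemma summand_eq:
  fixes q r :: complex
  assumes i: "i \<in> nondec_tuples k m" and k: "k > 0" and m: "m > 0"
    and con: "q ^ m * (\<Prod>j<k. t j) = 1" and rq: "r ^ 2 = q"
    and sp: "(\<Prod>j<k. s j) = inverse (r ^ m)"
  shows "summand q (rot k c t) (rot k c s) k m i = (-1) ^ (m - 1) * r ^ (m ^ 2) * ff q t k m c i 0"
proof -
  have qm: "q ^ m \<noteq> 0" and tnz: "\<And>j. j < k \<Longrightarrow> t j \<noteq> 0" using nz_from_constraint[OF con] by auto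
  have q0: "q \<noteq> 0" using qm m by auto
  have r0: "r \<noteq> 0" using q0 rq by auto
  define y where "y = (\<lambda>l. q ^ l * PP t k c i l)"
  have ynz: "y l \<noteq> 0" for l unfolding y_def using q0 PP_nz[OF tnz k] by auto
  define D where "D = denom q (rot k c t) k m i"
  have D: "D = (\<Prod>l\<in>{1..<m}. (1 - y l))" unfolding D_def y_def by (rule denom_eq[OF i k])
  have v0: "vv q t k c i 0 = 1" unfolding vv_def using PP_zero[OF i] by simp
  have vb: "vv q t k c i b = 1 / y b" for b unfolding vv_def y_def by simp
  have e0: "{..<m} - {0} = {1..<m}" by auto
  have pw: "1 / (1 - 1 / y b) = (-1) * (y b / (1 - y b))" for b
    using ynz[of b] by (cases "y b = 1") (auto simp: field_simps)
  have "ff q t k m c i 0 = (\<Prod>b\<in>{1..<m}. 1 / (1 - 1 / y b))"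
    unfolding ff_def e0 v0 unfolding vb by (rule refl)
  also have "\<dots> = (\<Prod>b\<in>{1..<m}. (-1) * (y b / (1 - y b)))"
    by (simp only: pw)
  also have "\<dots> = (\<Prod>b\<in>{1..<m}. (-1::complex)) * (\<Prod>b\<in>{1..<m}. y b / (1 - y b))"
    by (rule prod.distrib)
  also have "\<dots> = (-1) ^ (m - 1) * ((\<Prod>b\<in>{1..<m}. y b) / D)"
    unfolding D prod_dividef by simp
  finally have ff0: "ff q t k m c i 0 = (-1) ^ (m - 1) * ((\<Prod>b\<in>{1..<m}. y b) / D)" .
  have py: "(\<Prod>b\<in>{1..<m}. y b) = q ^ (\<Sum>b\<in>{1..<m}. b) * (\<Prod>b\<in>{1..<m}. PP t k c i b)"
    unfolding y_def by (simp add: prod.distrib power_sum)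
  define Q where "Q = (\<Prod>p<k. t ((p + c) mod k) ^ i p)"
  have Qnz: "Q \<noteq> 0" unfolding Q_def using tnz k by (auto simp: prod_zero_iff)
  have pPP: "(\<Prod>b\<in>{1..<m}. PP t k c i b) = (\<Prod>p<k. t p) ^ m / Q"
    using prodPP[OF i k, of t c] Qnz unfolding Q_def by (simp add: field_simps)
  have pt: "(\<Prod>p<k. t p) = 1 / q ^ m" using con qm by (simp add: field_simps)
  have num: "(\<Prod>j<k. rot k c s j / rot k c t j ^ i j) = inverse (r ^ m) / Q"
    unfolding Q_def rot_def prod_dividef using prod_rot[OF k, of s c] sp by simp
  have sumb: "q ^ (\<Sum>b\<in>{1..<m}. b) = r ^ (m * (m - 1))"
    using gauss2[of m] rq by (metis power_mult)
  have expo: "m + (m ^ 2 + m * (m - 1)) = 2 * m * m" using m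
    by (cases m) (auto simp: power2_eq_square algebra_simps)
  have E: "r ^ m * (r ^ (m ^ 2) * r ^ (m * (m - 1))) = (q ^ m) ^ m"
    unfolding rq[symmetric] power_add[symmetric] power_mult[symmetric] expo by (simp add: mult_ac)
  have sgn: "(-1::complex) ^ (m - 1) * (-1) ^ (m - 1) = 1"
    by (simp add: power_add[symmetric])
  have "summand q (rot k c t) (rot k c s) k m i = inverse (r ^ m) / Q / D"
    unfolding summand_def num D_def ..
  also have "\<dots> = r ^ (m ^ 2) * (r ^ (m * (m - 1)) * ((1 / q ^ m) ^ m / Q)) / D"
  proof -
    have "inverse (r ^ m) = r ^ (m ^ 2) * r ^ (m * (m - 1)) * (1 / q ^ m) ^ m"
      using E r0 qm by (simp add: field_simps power_one_over)
    then show ?thesis by (simp add: mult_ac)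
  qed
  also have "\<dots> = (-1) ^ (m - 1) * r ^ (m ^ 2) * ff q t k m c i 0"
    unfolding ff0 py sumb pPP pt
    by (simp add: mult_ac sgn)
  finally show ?thesis .
qed

definition nn :: "nat \<Rightarrow> nat \<Rightarrow> (nat \<Rightarrow> nat) \<Rightarrow> nat" where
  "nn k m i = card {j. j < k \<and> i j < m}"

definition sig_i :: "nat \<Rightarrow> nat \<Rightarrow> (nat \<Rightarrow> nat) \<Rightarrow> (nat \<Rightarrow> nat)" where
  "sig_i k m i = (\<lambda>j. if j < k then (if j < k - nn k m i then 1 else Suc (i (j - (k - nn k m i)))) else undefined)"

definition sig :: "nat \<Rightarrow> nat \<Rightarrow> nat \<times> (nat \<Rightarrow> nat) \<Rightarrow> nat \<times> (nat \<Rightarrow> nat)" where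
  "sig k m x = ((fst x + nn k m (snd x)) mod k, sig_i k m (snd x))"

lemma nn_facts:
  assumes i: "i \<in> nondec_tuples k m"
  shows "nn k m i \<le> k" "\<And>j. j < k \<Longrightarrow> i j < m \<longleftrightarrow> j < nn k m i"
proof -
  have e: "{j. j < k \<and> i j < m} = {..<nn k m i}" unfolding nn_def by (rule nd_downset_lt[OF i])
  have "{..<nn k m i} \<subseteq> {..<k}" unfolding e[symmetric] by auto
  then show "nn k m i \<le> k" by auto
  fix j assume "j < k"
  then show "i j < m \<longleftrightarrow> j < nn k m i" using e by blast
qed

lemma sig_i_mem:
  assumes i: "i \<in> nondec_tuples k m"
  shows "sig_i k m i \<in> nondec_tuples k m"
proof -
  let ?n = "nn k m i"
  have nk: "?n \<le> k" and iff: "\<And>j. j < k \<Longrightarrow> i j < m \<longleftrightarrow> j < ?n" using nn_facts[OF i] by auto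
  have vals: "sig_i k m i j \<in> {1..m}" if j: "j < k" for j
  proof (cases "j < k - ?n")
    case True then show ?thesis using j nd_vals[OF i, of 0] by (simp add: sig_i_def)
  next
    case False
    then have "j - (k - ?n) < ?n" "j - (k - ?n) < k" using j nk by auto
    then have "i (j - (k - ?n)) < m" using iff by blast
    then show ?thesis using j False by (simp add: sig_i_def)
  qed
  have mono: "sig_i k m i j \<le> sig_i k m i (Suc j)" if j: "Suc j < k" for j
  proof -
    consider "Suc j < k - ?n" | "j < k - ?n" "\<not> Suc j < k - ?n" | "\<not> j < k - ?n" by linarith
    then show ?thesis
    proof cases
      case 1 then show ?thesis using j by (simp add: sig_i_def)
    next
      case 2 then show ?thesis using j by (simp add: sig_i_def)
    next
      case 3
      then have "j - (k - ?n) \<le> Suc j - (k - ?n)" "Suc j - (k - ?n) < k" using j nk by auto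
      then have "i (j - (k - ?n)) \<le> i (Suc j - (k - ?n))" by (rule nd_mono[OF i])
      then show ?thesis using j 3 by (simp add: sig_i_def)
    qed
  qed
  show ?thesis unfolding nondec_tuples_def
    using vals mono by (auto simp: PiE_def Pi_def extensional_def sig_i_def)
qed


lemma mod_shift_eq:
  fixes p c n k :: nat
  assumes "n \<le> k"
  shows "(p + (k - n) + (c + n) mod k) mod k = (p + c) mod k"
proof -
  have "(p + (k - n) + (c + n) mod k) mod k = (p + (k - n) + (c + n)) mod k" by (simp add: mod_add_right_eq)
  also have "p + (k - n) + (c + n) = (p + c) + k" using assms by simp
  finally show ?thesis by simp
qed

lemma PP_sig:
  assumes i: "i \<in> nondec_tuples k m" and l: "1 \<le> l" "l < m"
  shows "PP t k ((c + nn k m i) mod k) (sig_i k m i) l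
       = (\<Prod>p<k - nn k m i. t ((p + (c + nn k m i) mod k) mod k)) * PP t k c i (l - 1)"
proof -
  let ?n = "nn k m i" let ?w = "k - nn k m i" let ?c = "(c + nn k m i) mod k"
  have nk: "?n \<le> k" and iff: "\<And>j. j < k \<Longrightarrow> i j < m \<longleftrightarrow> j < ?n" using nn_facts[OF i] by auto
  have S: "{p. p < k \<and> sig_i k m i p \<le> l} = {..<?w} \<union> (\<lambda>p. p + ?w) ` {p. p < k \<and> i p \<le> l - 1}"
  proof (intro set_eqI iffI)
    fix p assume p: "p \<in> {p. p < k \<and> sig_i k m i p \<le> l}"
    show "p \<in> {..<?w} \<union> (\<lambda>p. p + ?w) ` {p. p < k \<and> i p \<le> l - 1}"
    proof (cases "p < ?w")
      case False
      then have "i (p - ?w) \<le> l - 1" "p - ?w < k" using p by (auto simp: sig_i_def)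
      moreover have "p = (p - ?w) + ?w" using False by simp
      ultimately show ?thesis by blast
    qed simp
  next
    fix p assume p: "p \<in> {..<?w} \<union> (\<lambda>p. p + ?w) ` {p. p < k \<and> i p \<le> l - 1}"
    show "p \<in> {p. p < k \<and> sig_i k m i p \<le> l}"
    proof (cases "p < ?w")
      case True then show ?thesis using l by (auto simp: sig_i_def)
    next
      case False
      then obtain p' where p': "p = p' + ?w" "p' < k" "i p' \<le> l - 1" using p by auto
      then have "i p' < m" using l by auto
      then have "p' < ?n" using iff p' by blast
      then show ?thesis using p' l by (auto simp: sig_i_def)
    qed
  qed
  have "PP t k ?c (sig_i k m i) l = (\<Prod>p\<in>{..<?w}. t ((p + ?c) mod k)) *
      (\<Prod>p\<in>(\<lambda>p. p + ?w) ` {p. p < k \<and> i p \<le> l - 1}. t ((p + ?c) mod k))"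
    unfolding PP_def S by (rule prod.union_disjoint) auto
  also have "(\<Prod>p\<in>(\<lambda>p. p + ?w) ` {p. p < k \<and> i p \<le> l - 1}. t ((p + ?c) mod k))
      = (\<Prod>p\<in>{p. p < k \<and> i p \<le> l - 1}. t ((p + ?w + ?c) mod k))"
    by (subst prod.reindex) (auto simp: inj_on_def)
  also have "\<dots> = PP t k c i (l - 1)"
    unfolding PP_def using mod_shift_eq[OF nk] by simp
  finally show ?thesis by simp
qed

lemma PP_last:
  assumes i: "i \<in> nondec_tuples k m" and m: "m > 0" and k: "k > 0"
  shows "(\<Prod>p<k - nn k m i. t ((p + (c + nn k m i) mod k) mod k)) * PP t k c i (m - 1) = (\<Prod>p<k. t p)"
proof -
  let ?n = "nn k m i" let ?w = "k - nn k m i" let ?c = "(c + nn k m i) mod k"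
  have nk: "?n \<le> k" and iff: "\<And>j. j < k \<Longrightarrow> i j < m \<longleftrightarrow> j < ?n" using nn_facts[OF i] by auto
  have S: "{p. p < k \<and> i p \<le> m - 1} = {..<?n}"
  proof (intro set_eqI iffI)
    fix p assume "p \<in> {p. p < k \<and> i p \<le> m - 1}"
    then show "p \<in> {..<?n}" using iff[of p] m by auto
  next
    fix p assume "p \<in> {..<?n}"
    then have "p < k" "i p < m" using iff[of p] nk by auto
    then show "p \<in> {p. p < k \<and> i p \<le> m - 1}" by auto
  qed
  have A: "(\<Prod>p<?w. t ((p + ?c) mod k)) = (\<Prod>p\<in>{?n..<k}. t ((p + c) mod k))"
  proof -
    have "(\<Prod>p\<in>{?n..<k}. t ((p + c) mod k)) = (\<Prod>p<?w. t ((?n + p + c) mod k))"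
      using nk by (subst prod_shift_ivl) auto
    also have "\<dots> = (\<Prod>p<?w. t ((p + ?c) mod k))"
      by (rule prod.cong) (auto simp: mod_add_right_eq add.commute add.left_commute)
    finally show ?thesis by simp
  qed
  have "(\<Prod>p<?w. t ((p + ?c) mod k)) * PP t k c i (m - 1)
      = (\<Prod>p\<in>{?n..<k}. t ((p + c) mod k)) * (\<Prod>p\<in>{..<?n}. t ((p + c) mod k))"
    unfolding A PP_def S ..
  also have "\<dots> = (\<Prod>p\<in>{..<k}. t ((p + c) mod k))"
  proof -
    have e: "{..<k} = {..<?n} \<union> {?n..<k}" using nk by auto
    have "(\<Prod>p\<in>{..<?n} \<union> {?n..<k}. t ((p + c) mod k)) = (\<Prod>p\<in>{..<?n}. t ((p + c) mod k)) * (\<Prod>p\<in>{?n..<k}. t ((p + c) mod k))"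
      by (rule prod.union_disjoint) auto
    then show ?thesis unfolding e[symmetric] by (simp add: mult.commute)
  qed
  also have "\<dots> = (\<Prod>p<k. t p)" by (rule prod_rot[OF k])
  finally show ?thesis .
qed


definition rho :: "nat \<Rightarrow> nat \<Rightarrow> nat" where
  "rho m l = (if l = 0 then m - 1 else l - 1)"

lemma rho_bij:
  assumes "m > 0"
  shows "bij_betw (rho m) {..<m} {..<m}"
proof -
  have "inj_on (rho m) {..<m}" by (auto simp: inj_on_def rho_def split: if_splits)
  moreover have "rho m ` {..<m} \<subseteq> {..<m}" using assms by (auto simp: rho_def)
  ultimately show ?thesis by (simp add: bij_betw_def endo_inj_surj)
qed

lemma rho_lt: "m > 0 \<Longrightarrow> l < m \<Longrightarrow> rho m l < m"
  by (auto simp: rho_def)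

definition AA :: "(nat \<Rightarrow> complex) \<Rightarrow> nat \<Rightarrow> nat \<Rightarrow> nat \<Rightarrow> (nat \<Rightarrow> nat) \<Rightarrow> complex" where
  "AA t k m c i = (\<Prod>p<k - nn k m i. t ((p + (c + nn k m i) mod k) mod k))"

lemma vv_sig:
  fixes q :: complex
  assumes i: "i \<in> nondec_tuples k m" and k: "k > 0" and m: "m > 0"
    and con: "q ^ m * (\<Prod>j<k. t j) = 1" and l: "l < m"
  shows "vv q t k ((c + nn k m i) mod k) (sig_i k m i) l = (1 / (q * AA t k m c i)) * vv q t k c i (rho m l)"
proof (cases "l = 0")
  case True
  have L: "vv q t k ((c + nn k m i) mod k) (sig_i k m i) l = 1"
    unfolding vv_def True using PP_zero[OF sig_i_mem[OF i]] by simp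
  have P: "AA t k m c i * PP t k c i (m - 1) = (\<Prod>j<k. t j)" unfolding AA_def by (rule PP_last[OF i m k])
  have qq: "q * q ^ (m - 1) = q ^ m" using m by (cases m) auto
  have "(1 / (q * AA t k m c i)) * vv q t k c i (rho m l) = 1 / ((q * q ^ (m - 1)) * (AA t k m c i * PP t k c i (m - 1)))"
    unfolding vv_def rho_def True by (simp add: mult_ac)
  also have "\<dots> = 1" unfolding qq P using con by simp
  finally show ?thesis using L by simp
next
  case False
  have P: "PP t k ((c + nn k m i) mod k) (sig_i k m i) l = AA t k m c i * PP t k c i (l - 1)"
    unfolding AA_def using PP_sig[OF i _ l] False by simp
  have qq: "q ^ l = q * q ^ (l - 1)" using False by (cases l) auto
  show ?thesis unfolding vv_def P rho_def using False qq by (simp add: mult_ac)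
qed

lemma AA_nz:
  assumes "\<And>j. j < k \<Longrightarrow> t j \<noteq> 0" "k > 0"
  shows "AA t k m c i \<noteq> 0"
  unfolding AA_def using assms by (auto simp: prod_zero_iff)

lemma ff_sig:
  fixes q :: complex
  assumes i: "i \<in> nondec_tuples k m" and k: "k > 0" and m: "m > 0"
    and con: "q ^ m * (\<Prod>j<k. t j) = 1" and a: "a < m"
  shows "ff q t k m ((c + nn k m i) mod k) (sig_i k m i) a = ff q t k m c i (rho m a)"
proof -
  have qm: "q ^ m \<noteq> 0" and tnz: "\<And>j. j < k \<Longrightarrow> t j \<noteq> 0" using nz_from_constraint[OF con] by auto
  have q0: "q \<noteq> 0" using qm m by auto
  define lam where "lam = 1 / (q * AA t k m c i)"
  have lnz: "lam \<noteq> 0" unfolding lam_def using q0 AA_nz[OF tnz k] by simp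
  let ?v = "vv q t k c i"
  have V: "\<And>l. l < m \<Longrightarrow> vv q t k ((c + nn k m i) mod k) (sig_i k m i) l = lam * ?v (rho m l)"
    unfolding lam_def by (rule vv_sig[OF i k m con])
  have canc: "lam * x / (lam * x - lam * y) = x / (x - y)" for x y
    using lnz by (simp add: right_diff_distrib[symmetric])
  have "ff q t k m ((c + nn k m i) mod k) (sig_i k m i) a
     = (\<Prod>b\<in>{..<m}-{a}. ?v (rho m a) / (?v (rho m a) - ?v (rho m b)))"
    unfolding ff_def
    by (rule prod.cong) (use V a canc in auto)
  also have "\<dots> = (\<Prod>b\<in>rho m ` ({..<m}-{a}). ?v (rho m a) / (?v (rho m a) - ?v b))"
  proof -
    have "inj_on (rho m) ({..<m}-{a})" using bij_betw_imp_inj_on[OF rho_bij[OF m]] by (rule inj_on_subset) auto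
    then show ?thesis by (simp add: prod.reindex)
  qed
  also have "rho m ` ({..<m}-{a}) = {..<m} - {rho m a}"
  proof -
    have b: "bij_betw (rho m) {..<m} {..<m}" by (rule rho_bij[OF m])
    have "rho m ` ({..<m}-{a}) = rho m ` {..<m} - rho m ` {a}"
      by (rule inj_on_image_set_diff[OF bij_betw_imp_inj_on[OF b]]) (use a in auto)
    then show ?thesis using b by (simp add: bij_betw_def)
  qed
  finally show ?thesis unfolding ff_def .
qed

definition stabset :: "nat \<Rightarrow> (nat \<Rightarrow> nat) \<Rightarrow> (nat \<Rightarrow> nat) set" where
  "stabset k i = {p. p permutes {0..<k} \<and> (\<forall>j<k. i (p j) = i j)}"

definition orb :: "nat \<Rightarrow> (nat \<Rightarrow> nat) \<Rightarrow> (nat \<Rightarrow> nat) set" where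
  "orb k i = (\<lambda>p. i \<circ> p) ` {p. p permutes {0..<k}}"

lemma fiber_card:
  assumes p0: "p0 permutes {0..<k}"
  shows "card {p. p permutes {0..<k} \<and> i \<circ> p = i \<circ> p0} = stab_card k i"
proof -
  have "bij_betw (\<lambda>p. p \<circ> inv p0) {p. p permutes {0..<k} \<and> i \<circ> p = i \<circ> p0} (stabset k i)"
  proof (rule bij_betw_byWitness[where f' = "\<lambda>s. s \<circ> p0"])
    show "\<forall>a\<in>{p. p permutes {0..<k} \<and> i \<circ> p = i \<circ> p0}. a \<circ> inv p0 \<circ> p0 = a"
      using permutes_inv_o(2)[OF p0] by (auto simp: o_assoc[symmetric])
    show "\<forall>a'\<in>stabset k i. a' \<circ> p0 \<circ> inv p0 = a'"
      using permutes_inv_o(1)[OF p0] by (auto simp: o_assoc[symmetric])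
    show "(\<lambda>p. p \<circ> inv p0) ` {p. p permutes {0..<k} \<and> i \<circ> p = i \<circ> p0} \<subseteq> stabset k i"
    proof safe
      fix p assume p: "p permutes {0..<k}" "i \<circ> p = i \<circ> p0"
      have "(p \<circ> inv p0) permutes {0..<k}" by (rule permutes_compose[OF permutes_inv[OF p0] p(1)])
      moreover have "i ((p \<circ> inv p0) j) = i j" for j
      proof -
        have "i (p (inv p0 j)) = i (p0 (inv p0 j))" using p(2) by (metis comp_apply)
        then show ?thesis using permutes_inverses(1)[OF p0] by simp
      qed
      ultimately show "p \<circ> inv p0 \<in> stabset k i" unfolding stabset_def by simp
    qed
    show "(\<lambda>s. s \<circ> p0) ` stabset k i \<subseteq> {p. p permutes {0..<k} \<and> i \<circ> p = i \<circ> p0}"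
    proof safe
      fix s assume s: "s \<in> stabset k i"
      then have sp: "s permutes {0..<k}" and si: "\<And>j. j < k \<Longrightarrow> i (s j) = i j" unfolding stabset_def by auto
      show "(s \<circ> p0) permutes {0..<k}" by (rule permutes_compose[OF p0 sp])
      show "i \<circ> (s \<circ> p0) = i \<circ> p0"
      proof
        fix x
        show "(i \<circ> (s \<circ> p0)) x = (i \<circ> p0) x"
        proof (cases "p0 x < k")
          case True then show ?thesis using si by simp
        next
          case False
          then have "s (p0 x) = p0 x" using permutes_not_in[OF sp] by simp
          then show ?thesis by simp
        qed
      qed
    qed
  qed
  then show ?thesis unfolding stab_card_def stabset_def[symmetric] by (rule bij_betw_same_card)
qed

lemma orb_card:
  shows "card (orb k i) * stab_card k i = fact k"
proof -
  let ?P = "{p. p permutes {0..<k}}"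
  let ?F = "\<lambda>g. {p. p permutes {0..<k} \<and> i \<circ> p = g}"
  have finP: "finite ?P" by (rule finite_permutations) simp
  have P: "?P = \<Union>(?F ` orb k i)" unfolding orb_def by auto
  have "card ?P = (\<Sum>g\<in>orb k i. card (?F g))"
    unfolding P by (rule card_UN_disjoint) (use finP in \<open>auto simp: orb_def\<close>)
  also have "\<dots> = (\<Sum>g\<in>orb k i. stab_card k i)"
  proof (rule sum.cong)
    fix g assume "g \<in> orb k i"
    then obtain p0 where p0: "p0 permutes {0..<k}" "g = i \<circ> p0" unfolding orb_def by auto
    show "card (?F g) = stab_card k i" unfolding p0(2) by (rule fiber_card[OF p0(1)])
  qed simp
  finally show ?thesis using card_permutations[of "{0..<k}" k] by simp
qed


lemma orb_sub:
  assumes i: "i \<in> nondec_tuples k m"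
  shows "orb k i \<subseteq> {0..<k} \<rightarrow>\<^sub>E {1..m}"
proof
  fix g assume "g \<in> orb k i"
  then obtain p where p: "p permutes {0..<k}" "g = i \<circ> p" unfolding orb_def by auto
  have iE: "i \<in> {0..<k} \<rightarrow>\<^sub>E {1..m}" using i unfolding nondec_tuples_def by auto
  show "g \<in> {0..<k} \<rightarrow>\<^sub>E {1..m}"
  proof (rule PiE_I)
    fix j assume "j \<in> {0..<k}"
    then have "p j \<in> {0..<k}" using permutes_in_image[OF p(1)] by simp
    then show "g j \<in> {1..m}" using iE p(2) by auto
  next
    fix j assume "j \<notin> {0..<k}"
    then have "p j = j" using permutes_not_in[OF p(1)] by simp
    then show "g j = undefined" using iE p(2) \<open>j \<notin> {0..<k}\<close> by (auto simp: PiE_def extensional_def)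
  qed
qed

lemma nd_sorted:
  assumes i: "i \<in> nondec_tuples k m"
  shows "sorted (map i [0..<k])"
  unfolding sorted_iff_nth_mono using nd_mono[OF i] by auto

lemma orb_cover:
  assumes g: "g \<in> {0..<k} \<rightarrow>\<^sub>E {1..m}"
  shows "\<exists>i\<in>nondec_tuples k m. g \<in> orb k i"
proof -
  define xs where "xs = map g [0..<k]"
  define ys where "ys = sort xs"
  define i where "i = (\<lambda>j. if j < k then ys ! j else undefined)"
  have ly: "length ys = k" unfolding ys_def xs_def by simp
  have sy: "set ys \<subseteq> {1..m}" unfolding ys_def xs_def using g by auto
  have sorted: "sorted ys" unfolding ys_def by simp
  have iE: "i \<in> {0..<k} \<rightarrow>\<^sub>E {1..m}"
  proof (rule PiE_I)
    fix j assume "j \<in> {0..<k}"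
    then have "ys ! j \<in> set ys" using ly by simp
    then show "i j \<in> {1..m}" using sy \<open>j \<in> {0..<k}\<close> unfolding i_def by auto
  qed (simp add: i_def)
  have im: "\<forall>j. Suc j < k \<longrightarrow> i j \<le> i (Suc j)"
    unfolding i_def using sorted ly by (auto intro: sorted_nth_mono)
  have iN: "i \<in> nondec_tuples k m"
    unfolding nondec_tuples_def using iE im by simp
  have "mset xs = mset ys" unfolding ys_def by simp
  then obtain p where p: "p permutes {..<length ys}" "permute_list p ys = xs"
    by (rule mset_eq_permutation)
  have p': "p permutes {0..<k}" using p(1) ly by (simp add: lessThan_atLeast0)
  have "g = i \<circ> p"
  proof
    fix j
    show "g j = (i \<circ> p) j"
    proof (cases "j < k")
      case True
      have "xs ! j = ys ! p j" using p(2) True ly unfolding permute_list_def by (metis length_map length_upt minus_nat.diff_0 nth_map_upt add_0)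
      moreover have "p j < k" using permutes_in_image[OF p'] True by simp
      ultimately show ?thesis using True unfolding xs_def i_def by simp
    next
      case False
      then have "p j = j" using permutes_not_in[OF p'] by simp
      then show ?thesis using False g unfolding i_def by (auto simp: PiE_def extensional_def)
    qed
  qed
  then show ?thesis using iN p' unfolding orb_def by blast
qed

lemma orb_disj:
  assumes i1: "i1 \<in> nondec_tuples k m" and i2: "i2 \<in> nondec_tuples k m"
    and g: "g \<in> orb k i1" "g \<in> orb k i2"
  shows "i1 = i2"
proof -
  obtain p1 where p1: "p1 permutes {0..<k}" "g = i1 \<circ> p1" using g(1) unfolding orb_def by auto
  obtain p2 where p2: "p2 permutes {0..<k}" "g = i2 \<circ> p2" using g(2) unfolding orb_def by auto
  define \<pi> where "\<pi> = p2 \<circ> inv p1"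
  have pi: "\<pi> permutes {0..<k}" unfolding \<pi>_def by (rule permutes_compose[OF permutes_inv[OF p1(1)] p2(1)])
  have e: "i1 j = i2 (\<pi> j)" for j
  proof -
    have "i1 (p1 (inv p1 j)) = i2 (p2 (inv p1 j))" using p1(2) p2(2) by (metis comp_apply)
    then show ?thesis unfolding \<pi>_def using permutes_inverses(1)[OF p1(1)] by simp
  qed
  let ?L1 = "map i1 [0..<k]" let ?L2 = "map i2 [0..<k]"
  have "permute_list \<pi> ?L2 = ?L1"
  proof -
    have "\<pi> j < k" if "j < k" for j using permutes_in_image[OF pi] that by simp
    then show ?thesis unfolding permute_list_def by (auto simp: e intro: nth_equalityI)
  qed
  moreover have "\<pi> permutes {..<length ?L2}" using pi by (simp add: lessThan_atLeast0)
  ultimately have "mset ?L1 = mset ?L2" by (metis mset_permute_list)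
  then have "sort ?L2 = ?L1" using nd_sorted[OF i1] by (rule properties_for_sort)
  then have L: "?L1 = ?L2" using nd_sorted[OF i2] by (simp add: sorted_sort_id)
  show ?thesis
  proof
    fix j
    show "i1 j = i2 j"
    proof (cases "j < k")
      case True
      then show ?thesis using arg_cong[OF L, of "\<lambda>xs. xs ! j"] by simp
    next
      case False
      then show ?thesis using i1 i2 unfolding nondec_tuples_def by (auto simp: PiE_def extensional_def)
    qed
  qed
qed

lemma sum_inv_stab:
  shows "(\<Sum>i\<in>nondec_tuples k m. 1 / of_nat (stab_card k i) :: complex) = of_nat m ^ k / fact k"
proof -
  let ?N = "nondec_tuples k m"
  have finN: "finite ?N" unfolding nondec_tuples_def by (rule finite_subset[of _ "{0..<k} \<rightarrow>\<^sub>E {1..m}"]) (auto intro: finite_PiE)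
  have finO: "finite (orb k i)" for i unfolding orb_def by (intro finite_imageI finite_permutations) simp
  have E: "{0..<k} \<rightarrow>\<^sub>E {1..m} = \<Union>(orb k ` ?N)"
  proof (intro set_eqI iffI)
    fix g assume "g \<in> {0..<k} \<rightarrow>\<^sub>E {1..m}"
    then obtain i where "i \<in> ?N" "g \<in> orb k i" using orb_cover by blast
    then show "g \<in> \<Union>(orb k ` ?N)" by blast
  next
    fix g assume "g \<in> \<Union>(orb k ` ?N)"
    then obtain i where "i \<in> ?N" "g \<in> orb k i" by blast
    then show "g \<in> {0..<k} \<rightarrow>\<^sub>E {1..m}" using orb_sub by blast
  qed
  have "m ^ k = card ({0..<k} \<rightarrow>\<^sub>E {1..m})" by (simp add: card_PiE)
  also have "\<dots> = (\<Sum>i\<in>?N. card (orb k i))"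
    unfolding E by (rule card_UN_disjoint) (use finN finO orb_disj in blast)+
  finally have mk: "m ^ k = (\<Sum>i\<in>?N. card (orb k i))" .
  have stnz: "stab_card k i \<noteq> 0" for i
  proof -
    have "id \<in> {p. p permutes {0..<k} \<and> (\<forall>j<k. i (p j) = i j)}" by (simp add: permutes_id)
    moreover have "finite {p. p permutes {0..<k} \<and> (\<forall>j<k. i (p j) = i j)}"
      by (rule finite_subset[OF _ finite_permutations[of "{0..<k}"]]) auto
    ultimately have "card {p. p permutes {0..<k} \<and> (\<forall>j<k. i (p j) = i j)} > 0"
      by (subst card_gt_0_iff) blast
    then show ?thesis unfolding stab_card_def by simp
  qed
  have "(of_nat (m ^ k) :: complex) = (\<Sum>i\<in>?N. of_nat (card (orb k i)))" unfolding mk by simp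
  also have "\<dots> = (\<Sum>i\<in>?N. fact k / of_nat (stab_card k i))"
  proof (rule sum.cong)
    fix i
    have "of_nat (card (orb k i)) * of_nat (stab_card k i) = (fact k :: complex)"
      using orb_card[of k i] by (metis of_nat_fact of_nat_mult)
    then show "(of_nat (card (orb k i)) :: complex) = fact k / of_nat (stab_card k i)"
      using stnz[of i] by (simp add: field_simps)
  qed simp
  also have "\<dots> = fact k * (\<Sum>i\<in>?N. 1 / of_nat (stab_card k i))"
    by (simp add: sum_distrib_left)
  finally show ?thesis by (simp add: field_simps)
qed

lemma sig_i_one_iff:
  assumes i: "i \<in> nondec_tuples k m" and j: "j < k"
  shows "sig_i k m i j = 1 \<longleftrightarrow> j < k - nn k m i"
proof (cases "j < k - nn k m i")
  case False
  have nk: "nn k m i \<le> k" using nn_facts[OF i] by auto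
  then have "j - (k - nn k m i) < k" using j by auto
  then have "1 \<le> i (j - (k - nn k m i))" by (rule nd_vals[OF i])
  then show ?thesis using False j by (simp add: sig_i_def)
qed (use j in \<open>simp add: sig_i_def\<close>)

lemma sig_inj:
  assumes k: "k > 0"
  shows "inj_on (sig k m) ({..<k} \<times> nondec_tuples k m)"
proof (rule inj_onI)
  fix x y assume x: "x \<in> {..<k} \<times> nondec_tuples k m" and y: "y \<in> {..<k} \<times> nondec_tuples k m"
    and e: "sig k m x = sig k m y"
  obtain c1 i1 where x': "x = (c1, i1)" "c1 < k" "i1 \<in> nondec_tuples k m" using x by auto
  obtain c2 i2 where y': "y = (c2, i2)" "c2 < k" "i2 \<in> nondec_tuples k m" using y by auto
  have ec: "(c1 + nn k m i1) mod k = (c2 + nn k m i2) mod k" and ei: "sig_i k m i1 = sig_i k m i2"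
    using e x'(1) y'(1) by (auto simp: sig_def)
  have n1: "nn k m i1 \<le> k" and n2: "nn k m i2 \<le> k" using nn_facts x'(3) y'(3) by auto
  have "{j. j < k \<and> sig_i k m i1 j = 1} = {..<k - nn k m i1}" using sig_i_one_iff[OF x'(3)] by auto
  moreover have "{j. j < k \<and> sig_i k m i2 j = 1} = {..<k - nn k m i2}" using sig_i_one_iff[OF y'(3)] by auto
  ultimately have "k - nn k m i1 = k - nn k m i2" using ei by (metis card_lessThan)
  then have nn: "nn k m i1 = nn k m i2" using n1 n2 by simp
  have ii: "i1 = i2"
  proof
    fix j
    show "i1 j = i2 j"
    proof (cases "j < k")
      case True
      show ?thesis
      proof (cases "j < nn k m i1")
        case True
        have "sig_i k m i1 (j + (k - nn k m i1)) = Suc (i1 j)" "sig_i k m i2 (j + (k - nn k m i2)) = Suc (i2 j)"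
          using True n1 n2 nn by (auto simp: sig_i_def)
        then show ?thesis using ei nn by simp
      next
        case False
        then have "\<not> i1 j < m" "\<not> i2 j < m" using nn_facts(2)[OF x'(3) \<open>j < k\<close>] nn_facts(2)[OF y'(3) \<open>j < k\<close>] nn by auto
        moreover have "i1 j \<le> m" "i2 j \<le> m" using nd_vals x'(3) y'(3) \<open>j < k\<close> by auto
        ultimately show ?thesis by simp
      qed
    next
      case False
      then show ?thesis using x'(3) y'(3) unfolding nondec_tuples_def by (auto simp: PiE_def extensional_def)
    qed
  qed
  have "c1 mod k = c2 mod k" using ec nn by (metis mod_add_cancel_r)
  then have "c1 = c2" using x'(2) y'(2) by simp
  then show "x = y" using x'(1) y'(1) ii by simp
qed

lemma sig_in:
  assumes k: "k > 0" and x: "x \<in> {..<k} \<times> nondec_tuples k m"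
  shows "sig k m x \<in> {..<k} \<times> nondec_tuples k m"
  using x k sig_i_mem by (auto simp: sig_def)

lemma finite_N: "finite (nondec_tuples k m)"
  unfolding nondec_tuples_def by (rule finite_subset[of _ "{0..<k} \<rightarrow>\<^sub>E {1..m}"]) (auto intro: finite_PiE)

lemma h_inj_aux:
  fixes a b m :: nat
  assumes "(if a < m then Suc a else 1) = (if b < m then Suc b else 1)" "1 \<le> a" "a \<le> m" "1 \<le> b" "b \<le> m"
  shows "a = b"
  using assms by (cases "a < m"; cases "b < m") auto

lemma sig_bij:
  assumes k: "k > 0"
  shows "bij_betw (sig k m) ({..<k} \<times> nondec_tuples k m) ({..<k} \<times> nondec_tuples k m)"
proof -
  have fin: "finite ({..<k} \<times> nondec_tuples k m)"
    using finite_N by blast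
  have "sig k m ` ({..<k} \<times> nondec_tuples k m) \<subseteq> {..<k} \<times> nondec_tuples k m"
    using sig_in[OF k] by blast
  then show ?thesis using sig_inj[OF k] fin by (simp add: bij_betw_def endo_inj_surj)
qed

lemma stab_conj:
  assumes tau: "tau permutes {0..<k}" and h: "inj_on h (i ` {0..<k})"
    and i': "\<And>j. j < k \<Longrightarrow> i' j = h (i (tau j))"
  shows "stab_card k i' = stab_card k i"
proof -
  have tin: "tau j < k" if "j < k" for j using permutes_in_image[OF tau] that by simp
  have itin: "inv tau j < k" if "j < k" for j using permutes_in_image[OF permutes_inv[OF tau]] that by simp
  have "bij_betw (\<lambda>p. tau \<circ> p \<circ> inv tau) (stabset k i') (stabset k i)"
  proof (rule bij_betw_byWitness[where f' = "\<lambda>s. inv tau \<circ> s \<circ> tau"])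
    show "\<forall>a\<in>stabset k i'. inv tau \<circ> (tau \<circ> a \<circ> inv tau) \<circ> tau = a"
      using permutes_inv_o[OF tau] by (auto simp: fun_eq_iff o_def)
    show "\<forall>a'\<in>stabset k i. tau \<circ> (inv tau \<circ> a' \<circ> tau) \<circ> inv tau = a'"
      using permutes_inv_o[OF tau] by (auto simp: fun_eq_iff o_def)
    show "(\<lambda>p. tau \<circ> p \<circ> inv tau) ` stabset k i' \<subseteq> stabset k i"
    proof safe
      fix p assume p: "p \<in> stabset k i'"
      then have pp: "p permutes {0..<k}" and pi: "\<And>j. j < k \<Longrightarrow> i' (p j) = i' j" unfolding stabset_def by auto
      have "(tau \<circ> p \<circ> inv tau) permutes {0..<k}"
        by (intro permutes_compose[OF permutes_inv[OF tau]] permutes_compose[OF _ tau] pp)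
      moreover have "i ((tau \<circ> p \<circ> inv tau) j) = i j" if j: "j < k" for j
      proof -
        let ?j = "inv tau j"
        have j': "?j < k" by (rule itin[OF j])
        have pj: "p ?j < k" using permutes_in_image[OF pp] j' by simp
        have "h (i (tau (p ?j))) = h (i (tau ?j))" using pi[OF j'] i'[OF j'] i'[OF pj] by simp
        then have "i (tau (p ?j)) = i (tau ?j)" using h tin[OF pj] tin[OF j'] by (auto dest: inj_onD)
        then show ?thesis using permutes_inverses(1)[OF tau] by simp
      qed
      ultimately show "tau \<circ> p \<circ> inv tau \<in> stabset k i" unfolding stabset_def by simp
    qed
    show "(\<lambda>s. inv tau \<circ> s \<circ> tau) ` stabset k i \<subseteq> stabset k i'"
    proof safe
      fix s assume s: "s \<in> stabset k i"
      then have sp: "s permutes {0..<k}" and si: "\<And>j. j < k \<Longrightarrow> i (s j) = i j" unfolding stabset_def by auto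
      have "(inv tau \<circ> s \<circ> tau) permutes {0..<k}"
        by (intro permutes_compose[OF tau] permutes_compose[OF _ permutes_inv[OF tau]] sp)
      moreover have "i' ((inv tau \<circ> s \<circ> tau) j) = i' j" if j: "j < k" for j
      proof -
        have sj: "s (tau j) < k" using permutes_in_image[OF sp] tin[OF j] by simp
        have "i' (inv tau (s (tau j))) = h (i (tau (inv tau (s (tau j)))))" using i' itin[OF sj] by simp
        also have "\<dots> = h (i (s (tau j)))" using permutes_inverses(1)[OF tau] by simp
        also have "\<dots> = h (i (tau j))" using si[OF tin[OF j]] by simp
        also have "\<dots> = i' j" using i'[OF j] by simp
        finally show ?thesis by simp
      qed
      ultimately show "inv tau \<circ> s \<circ> tau \<in> stabset k i'" unfolding stabset_def by simp
    qed
  qed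
  then show ?thesis unfolding stab_card_def stabset_def[symmetric] by (rule bij_betw_same_card)
qed

lemma stab_sig:
  assumes i: "i \<in> nondec_tuples k m" and k: "k > 0"
  shows "stab_card k (sig_i k m i) = stab_card k i"
proof -
  let ?n = "nn k m i"
  have nk: "?n \<le> k" and iff: "\<And>j. j < k \<Longrightarrow> i j < m \<longleftrightarrow> j < ?n" using nn_facts[OF i] by auto
  define tau where "tau = (\<lambda>j. if j < k then (j + ?n) mod k else j)"
  define h where "h = (\<lambda>v::nat. if v < m then Suc v else 1)"
  have "bij_betw tau {0..<k} {0..<k}"
  proof -
    have "bij_betw (\<lambda>j. (j + ?n) mod k) {..<k} {..<k}" by (rule rot_bij[OF k])
    moreover have "\<And>j. j \<in> {..<k} \<Longrightarrow> (\<lambda>j. (j + ?n) mod k) j = tau j" unfolding tau_def by simp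
    ultimately have "bij_betw tau {..<k} {..<k}" by (rule bij_betw_cong[THEN iffD1, rotated])
    then show ?thesis by (simp add: lessThan_atLeast0)
  qed
  then have tau: "tau permutes {0..<k}" by (rule bij_imp_permutes) (simp add: tau_def)
  have hinj: "inj_on h (i ` {0..<k})"
  proof (rule inj_onI)
    fix a b assume a: "a \<in> i ` {0..<k}" and b: "b \<in> i ` {0..<k}" and e: "h a = h b"
    obtain ja jb where "ja < k" "a = i ja" "jb < k" "b = i jb" using a b by auto
    then have "1 \<le> a" "a \<le> m" "1 \<le> b" "b \<le> m" using nd_vals[OF i] by auto
    then show "a = b" using e unfolding h_def by (intro h_inj_aux[of a m b]) auto
  qed
  have i': "sig_i k m i j = h (i (tau j))" if j: "j < k" for j
  proof (cases "j < k - ?n")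
    case True
    then have t: "tau j = j + ?n" using j unfolding tau_def by simp
    have "\<not> i (j + ?n) < m" using iff[of "j + ?n"] True by auto
    then have "i (j + ?n) = m" using nd_vals[OF i, of "j + ?n"] True by auto
    then show ?thesis using True j t unfolding h_def by (simp add: sig_i_def)
  next
    case False
    have ge: "k \<le> j + ?n" using False nk by linarith
    have "(j + ?n) mod k = (j + ?n - k) mod k" using ge by (simp add: le_mod_geq)
    also have "\<dots> = j + ?n - k" using j nk by simp
    also have "\<dots> = j - (k - ?n)" using ge nk by simp
    finally have t: "tau j = j - (k - ?n)" using j unfolding tau_def by simp
    have "j - (k - ?n) < ?n" using j False nk by auto
    then have "i (j - (k - ?n)) < m" using iff[of "j - (k - ?n)"] nk by auto
    then show ?thesis using False j t unfolding h_def by (simp add: sig_i_def)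
  qed
  show ?thesis by (rule stab_conj[OF tau hinj i'])
qed

lemma rho_induct:
  assumes m: "m > 0" and Q0: "Q 0" and step: "\<And>a. a < m \<Longrightarrow> Q a \<Longrightarrow> Q (rho m a)" and a: "a < m"
  shows "Q a"
proof -
  have "Q (m - 1 - d)" if "d < m" for d
    using that
  proof (induction d)
    case 0
    have "Q (rho m 0)" by (rule step[OF m Q0])
    then show ?case by (simp add: rho_def)
  next
    case (Suc d)
    then have "Q (m - 1 - d)" by simp
    then have "Q (rho m (m - 1 - d))" using Suc.prems by (intro step) auto
    moreover have "rho m (m - 1 - d) = m - 1 - Suc d" using Suc.prems by (simp add: rho_def)
    ultimately show ?case by simp
  qed
  from this[of "m - 1 - a"] a show ?thesis by simp
qed

lemma vv_distinct:
  fixes q :: complex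
  assumes k: "k > 0" and m: "m > 0" and con: "q ^ m * (\<Prod>j<k. t j) = 1"
    and H: "\<forall>c<k. \<forall>i\<in>nondec_tuples k m. denom q (rot k c t) k m i \<noteq> 0"
    and x: "x \<in> {..<k} \<times> nondec_tuples k m"
  shows "inj_on (vv q t k (fst x) (snd x)) {..<m}"
proof -
  let ?X = "{..<k} \<times> nondec_tuples k m"
  have qm: "q ^ m \<noteq> 0" and tnz: "\<And>j. j < k \<Longrightarrow> t j \<noteq> 0" using nz_from_constraint[OF con] by auto
  have q0: "q \<noteq> 0" using qm m by auto
  define Q where "Q = (\<lambda>a. \<forall>x\<in>?X. \<forall>b<m. b \<noteq> a \<longrightarrow> vv q t k (fst x) (snd x) b \<noteq> vv q t k (fst x) (snd x) a)"
  have Q0: "Q 0" unfolding Q_def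
  proof (intro ballI allI impI)
    fix x b assume x: "x \<in> ?X" and b: "b < m" "b \<noteq> 0"
    obtain c i where ci: "x = (c, i)" "c < k" "i \<in> nondec_tuples k m" using x by auto
    have "denom q (rot k c t) k m i \<noteq> 0" using H ci by blast
    then have "(\<Prod>l\<in>{1..<m}. (1 - q ^ l * PP t k c i l)) \<noteq> 0"
      using denom_eq[OF ci(3) k, of q c t] by simp
    then have "1 - q ^ b * PP t k c i b \<noteq> 0" using b by (auto simp: prod_zero_iff)
    then have "vv q t k c i b \<noteq> 1" unfolding vv_def by (auto simp: field_simps)
    moreover have "vv q t k c i 0 = 1" unfolding vv_def using PP_zero[OF ci(3)] by simp
    ultimately show "vv q t k (fst x) (snd x) b \<noteq> vv q t k (fst x) (snd x) 0" using ci by simp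
  qed
  have step: "Q (rho m a)" if a: "a < m" and Qa: "Q a" for a
    unfolding Q_def
  proof (intro ballI allI impI)
    fix x b assume x: "x \<in> ?X" and b: "b < m" "b \<noteq> rho m a"
    obtain c i where ci: "x = (c, i)" "c < k" "i \<in> nondec_tuples k m" using x by auto
    have "b \<in> rho m ` {..<m}" using rho_bij[OF m] b by (simp add: bij_betw_def)
    then obtain b0 where b0: "b0 < m" "b = rho m b0" by auto
    have "b0 \<noteq> a" using b b0 by auto
    have sx: "sig k m x \<in> ?X" by (rule sig_in[OF k x])
    have sx': "sig k m x = ((c + nn k m i) mod k, sig_i k m i)" using ci by (simp add: sig_def)
    have "vv q t k (fst (sig k m x)) (snd (sig k m x)) b0 \<noteq> vv q t k (fst (sig k m x)) (snd (sig k m x)) a"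
      using bspec[OF Qa[unfolded Q_def] sx] b0 \<open>b0 \<noteq> a\<close> by simp
    then have "(1 / (q * AA t k m c i)) * vv q t k c i (rho m b0) \<noteq> (1 / (q * AA t k m c i)) * vv q t k c i (rho m a)"
      unfolding sx' using vv_sig[OF ci(3) k m con] b0 a by simp
    then show "vv q t k (fst x) (snd x) b \<noteq> vv q t k (fst x) (snd x) (rho m a)"
      using ci b0 by auto
  qed
  have all: "Q a" if "a < m" for a by (rule rho_induct[OF m Q0 step that])
  show ?thesis
  proof (rule inj_onI)
    fix a b assume "a \<in> {..<m}" "b \<in> {..<m}" "vv q t k (fst x) (snd x) a = vv q t k (fst x) (snd x) b"
    then show "a = b" using bspec[OF all[of b, unfolded Q_def] x] by auto
  qed
qed


theorem corollary9p3:
  fixes q r :: complex and t s :: "nat \<Rightarrow> complex" and m k :: nat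
  assumes "m > 0" and "k > 0"
    and "q ^ m * (\<Prod>j<k. t j) = 1"
    and "r ^ 2 = q"
    and "\<forall>j<k. s j ^ 2 = t j"
    and "(\<Prod>j<k. s j) = inverse (r ^ m)"
    and "\<forall>c<k. \<forall>i\<in>nondec_tuples k m. denom q (rot k c t) k m i \<noteq> 0"
  shows "(\<Sum>c<k. tilde_sum q (rot k c t) (rot k c s) k m)
           = (-1) ^ (m - 1) * r ^ (m ^ 2) * of_nat m ^ (k - 1) / fact (k - 1)"
proof -
  note m = assms(1) and k = assms(2) and con = assms(3) and rq = assms(4) and sp = assms(6) and H = assms(7)
  let ?N = "nondec_tuples k m"
  let ?X = "{..<k} \<times> nondec_tuples k m"
  let ?st = "\<lambda>x. of_nat (stab_card k (snd x)) :: complex"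
  define K where "K = (-1) ^ (m - 1) * r ^ (m ^ 2)"
  define S where "S = (\<lambda>a. \<Sum>x\<in>?X. ff q t k m (fst x) (snd x) a / ?st x)"
  have finX: "finite ?X" using finite_N by blast
  have S_rho: "S (rho m a) = S a" if a: "a < m" for a
  proof -
    have "S a = (\<Sum>x\<in>?X. ff q t k m (fst (sig k m x)) (snd (sig k m x)) a / ?st (sig k m x))"
      unfolding S_def by (rule sum.reindex_bij_betw[OF sig_bij[OF k], symmetric])
    also have "\<dots> = S (rho m a)" unfolding S_def
    proof (rule sum.cong)
      fix x assume x: "x \<in> ?X"
      obtain c i where ci: "x = (c, i)" "c < k" "i \<in> ?N" using x by auto
      have sx': "sig k m x = ((c + nn k m i) mod k, sig_i k m i)" using ci by (simp add: sig_def)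
      show "ff q t k m (fst (sig k m x)) (snd (sig k m x)) a / ?st (sig k m x) = ff q t k m (fst x) (snd x) (rho m a) / ?st x"
        unfolding sx' using ff_sig[OF ci(3) k m con a] stab_sig[OF ci(3) k] ci(1) by simp
    qed simp
    finally show ?thesis by simp
  qed
  have S_all: "S a = S 0" if "a < m" for a
    by (rule rho_induct[OF m, where Q = "\<lambda>a. S a = S 0"]) (use S_rho that in auto)
  have "(\<Sum>a<m. S a) = (\<Sum>x\<in>?X. (\<Sum>a<m. ff q t k m (fst x) (snd x) a) / ?st x)"
    unfolding S_def by (subst sum.swap) (simp add: sum_divide_distrib)
  also have "\<dots> = (\<Sum>x\<in>?X. 1 / ?st x)"
  proof (rule sum.cong)
    fix x assume x: "x \<in> ?X"
    have "(\<Sum>a<m. ff q t k m (fst x) (snd x) a) = 1"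
      unfolding ff_def by (rule lagrange1) (use vv_distinct[OF k m con H x] m in auto)
    then show "(\<Sum>a<m. ff q t k m (fst x) (snd x) a) / ?st x = 1 / ?st x" by simp
  qed simp
  also have "\<dots> = (\<Sum>c<k. \<Sum>i\<in>?N. 1 / of_nat (stab_card k i))"
    by (subst sum.cartesian_product) (simp add: split_def)
  also have "\<dots> = of_nat k * (of_nat m ^ k / fact k)" using sum_inv_stab[of k m] by simp
  finally have sumS: "(\<Sum>a<m. S a) = of_nat k * (of_nat m ^ k / fact k)" .
  have "(\<Sum>a<m. S a) = (\<Sum>a<m. S 0)" by (rule sum.cong[OF refl]) (rule S_all, simp)
  then have "(\<Sum>a<m. S a) = of_nat m * S 0" by simp
  then have S0: "S 0 = of_nat m ^ (k - 1) / fact (k - 1)"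
  proof -
    assume e: "(\<Sum>a<m. S a) = of_nat m * S 0"
    have fk: "(fact k :: complex) = of_nat k * fact (k - 1)" using k by (metis fact_nonzero fact_num_eq_if of_nat_fact neq0_conv)
    have mk: "(of_nat m :: complex) ^ k = of_nat m * of_nat m ^ (k - 1)" using k by (metis power_eq_if neq0_conv)
    have "of_nat m * S 0 = of_nat m * (of_nat m ^ (k - 1) / fact (k - 1))"
      using e sumS k unfolding fk mk by (simp add: field_simps) metis
    then show ?thesis using m by (metis mult_left_cancel of_nat_0_eq_iff neq0_conv)
  qed
  have "(\<Sum>c<k. tilde_sum q (rot k c t) (rot k c s) k m) = (\<Sum>c<k. \<Sum>i\<in>?N. K * ff q t k m c i 0 / of_nat (stab_card k i))"
    unfolding tilde_sum_def K_def using summand_eq[OF _ k m con rq sp] by simp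
  also have "\<dots> = K * S 0"
    unfolding S_def by (subst sum.cartesian_product) (simp add: sum_distrib_left split_def)
  finally show ?thesis unfolding S0 K_def by simp
qed

end
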